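(* Let $(X,d)$ be an ultrametric space, i.e. $d(x,y)\le\max(d(x,z),d(y,z))$ for all $x,y,z\in X$. Then every slowly oscillating function $f:X\to\mathbb R$ is glacially oscillating.
   Context: A function $g:X\to\mathbb R$ on a metric space is slowly oscillating if for all $r,\epsilon>0$ there is a bounded $K\subset X$ such that $x,y\in X\setminus K$ and $d(x,y)<r$ imply $|g(x)-g(y)|<\epsilon$. A glacial scale on a metric space $X$ is a sequence $\mathcal S=\{(K_i,n_i)\}_{i\ge1}$ of pairs, each $K_i$ a bounded subset of $X$ and $n_i$ a natural number, such that for every bounded $K\subset X$ and every $r>0$ there is $i$ with $K\subset K_i$ and $n_i>r$. An $\mathcal S$-chain is a finite sequence $x_1,\dots,x_n$ of points of $X$ such that for each $i\le n-1$ there is $m\ge1$ with $x_i,x_{i+1}\notin K_m$ and $d(x_i,x_{i+1})\le n_m$. A function $f:X\to\mathbb R$ is glacially oscillating if for every $\epsilon>0$ there is a glacial scale $\mathcal S$ such that $|f(x_1)-f(x_n)|<\epsilon$ for every $\mathcal S$-chain $x_1,\dots,x_n$. *)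

theory Defs
  imports "HOL-Analysis.Analysis"
begin

definition slowly_oscillating :: "('a::metric_space \<Rightarrow> real) \<Rightarrow> bool" where
  "slowly_oscillating g \<longleftrightarrow>
    (\<forall>r>0. \<forall>\<epsilon>>0. \<exists>K. bounded K \<and>
       (\<forall>x y. x \<notin> K \<longrightarrow> y \<notin> K \<longrightarrow> dist x y < r \<longrightarrow> \<bar>g x - g y\<bar> < \<epsilon>))"

text \<open>A glacial scale, indexed by the naturals (index 0 plays the role of 1 in the paper).\<close>
definition glacial_scale :: "(nat \<Rightarrow> 'a::metric_space set \<times> nat) \<Rightarrow> bool" where
  "glacial_scale S \<longleftrightarrow>
    (\<forall>i. bounded (fst (S i))) \<and>
    (\<forall>K r. bounded K \<longrightarrow> r > 0 \<longrightarrow> (\<exists>i. K \<subseteq> fst (S i) \<and> real (snd (S i)) > r))"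

definition S_chain :: "(nat \<Rightarrow> 'a::metric_space set \<times> nat) \<Rightarrow> 'a list \<Rightarrow> bool" where
  "S_chain S xs \<longleftrightarrow> xs \<noteq> [] \<and>
    (\<forall>i. Suc i < length xs \<longrightarrow>
       (\<exists>m. xs ! i \<notin> fst (S m) \<and> xs ! Suc i \<notin> fst (S m) \<and>
            dist (xs ! i) (xs ! Suc i) \<le> real (snd (S m))))"

definition glacially_oscillating :: "('a::metric_space \<Rightarrow> real) \<Rightarrow> bool" where
  "glacially_oscillating f \<longleftrightarrow>
    (\<forall>\<epsilon>>0. \<exists>S. glacial_scale S \<and>
       (\<forall>xs. S_chain S xs \<longrightarrow> \<bar>f (hd xs) - f (last xs)\<bar> < \<epsilon>))"

end

theory Submission
  imports Defs
begin

theorem proposition3p4: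
  fixes f :: "'a::metric_space \<Rightarrow> real"
  assumes ultra: "\<And>x y z::'a. dist x y \<le> max (dist x z) (dist y z)"
    and so: "slowly_oscillating f"
  shows "glacially_oscillating f"
  unfolding glacially_oscillating_def
proof (intro allI impI)
  fix \<epsilon> :: real assume ep: "\<epsilon> > 0"
  obtain p :: 'a where True by blast
  have iso: "dist p y = dist p x" if "dist x y < dist p x" for x y
  proof -
    have "dist p y \<le> max (dist p x) (dist y x)" by (rule ultra)
    moreover have "dist p x \<le> max (dist p y) (dist x y)" by (rule ultra)
    moreover have "dist y x = dist x y" by (rule dist_commute)
    ultimately show ?thesis using that unfolding max_def by (smt (verit))
  qed
  have "\<forall>n::nat. \<exists>B. \<forall>x y. dist p x > B \<longrightarrow> dist p y > B \<longrightarrow> dist x y < real n + 1 \<longrightarrow> \<bar>f x - f y\<bar> < \<epsilon>"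
  proof
    fix n :: nat
    have pos: "real n + 1 > 0" by simp
    obtain K where K: "bounded K" "\<forall>x y. x \<notin> K \<longrightarrow> y \<notin> K \<longrightarrow> dist x y < real n + 1 \<longrightarrow> \<bar>f x - f y\<bar> < \<epsilon>"
      using so[unfolded slowly_oscillating_def, rule_format, OF pos ep] by (elim exE conjE)
    obtain B where "\<forall>y\<in>K. dist p y \<le> B" using K(1) bounded_any_center by blast
    hence nk: "x \<notin> K" if "dist p x > B" for x using that by force
    show "\<exists>B. \<forall>x y. dist p x > B \<longrightarrow> dist p y > B \<longrightarrow> dist x y < real n + 1 \<longrightarrow> \<bar>f x - f y\<bar> < \<epsilon>"
      using K(2) nk by meson
  qed
  then obtain B where B: "\<And>n x y. dist p x > B n \<Longrightarrow> dist p y > B n \<Longrightarrow> dist x y < real n + 1 \<Longrightarrow> \<bar>f x - f y\<bar> < \<epsilon>"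
    by metis
  define R where "R n = max (real n) (B n)" for n
  define S where "S i = (cball p (R i), i)" for i
  have gs: "glacial_scale S"
    unfolding glacial_scale_def
  proof (intro conjI allI impI)
    fix i show "bounded (fst (S i))" by (simp add: S_def)
  next
    fix K :: "'a set" and r :: real assume "bounded K" "r > 0"
    then obtain C where C: "\<forall>y\<in>K. dist p y \<le> C" using bounded_any_center by blast
    obtain i :: nat where i: "real i > max r C" using reals_Archimedean2 by blast
    have "K \<subseteq> cball p (R i)" using C i by (force simp: R_def subset_iff)
    thus "\<exists>i. K \<subseteq> fst (S i) \<and> real (snd (S i)) > r" using i by (auto simp: S_def)
  qed
  show "\<exists>S. glacial_scale S \<and> (\<forall>xs. S_chain S xs \<longrightarrow> \<bar>f (hd xs) - f (last xs)\<bar> < \<epsilon>)"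
  proof (intro exI conjI allI impI)
    show "glacial_scale S" by (rule gs)
  next
    fix xs :: "'a list" assume ch: "S_chain S xs"
    hence ne: "xs \<noteq> []" and st: "\<And>i. Suc i < length xs \<Longrightarrow> (\<exists>m. dist p (xs ! i) > R m \<and> dist p (xs ! Suc i) > R m \<and>
            dist (xs ! i) (xs ! Suc i) \<le> real m)"
      unfolding S_chain_def S_def by (auto simp: not_le)
    let ?\<rho> = "dist p (xs ! 0)"
    have claim: "dist p (xs ! j) = ?\<rho> \<and> (j = 0 \<or> (\<exists>m. dist (xs ! 0) (xs ! j) \<le> real m \<and> R m < ?\<rho>))"
      if "j < length xs" for j
      using that
    proof (induction j)
      case 0 thus ?case by simp
    next
      case (Suc j)
      then have IH: "dist p (xs ! j) = ?\<rho>" "j = 0 \<or> (\<exists>m. dist (xs ! 0) (xs ! j) \<le> real m \<and> R m < ?\<rho>)" by auto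
      obtain m' where m': "dist p (xs ! j) > R m'" "dist (xs ! j) (xs ! Suc j) \<le> real m'"
        using st[OF Suc.prems] by blast
      have "dist (xs ! j) (xs ! Suc j) < dist p (xs ! j)" using m' by (auto simp: R_def)
      hence e: "dist p (xs ! Suc j) = ?\<rho>" using iso IH(1) by metis
      have "\<exists>m. dist (xs ! 0) (xs ! Suc j) \<le> real m \<and> R m < ?\<rho>"
      proof (cases "j = 0")
        case True thus ?thesis using m' IH(1) by auto
      next
        case False
        then obtain m where m: "dist (xs ! 0) (xs ! j) \<le> real m" "R m < ?\<rho>" using IH(2) by blast
        have d: "dist (xs ! 0) (xs ! Suc j) \<le> max (dist (xs ! 0) (xs ! j)) (dist (xs ! Suc j) (xs ! j))"
          by (rule ultra)
        show ?thesis
        proof (cases "m \<le> m'")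
          case True
          hence "real m \<le> real m'" by simp
          thus ?thesis using d m m' IH(1) by (intro exI[of _ m']) (auto simp: dist_commute)
        next
          case False
          hence "real m' \<le> real m" by simp
          thus ?thesis using d m m' by (intro exI[of _ m]) (auto simp: dist_commute)
        qed
      qed
      thus ?case using e by blast
    qed
    show "\<bar>f (hd xs) - f (last xs)\<bar> < \<epsilon>"
    proof (cases "length xs = 1")
      case True
      then obtain a where "xs = [a]" by (cases xs) auto
      thus ?thesis using ep by simp
    next
      case False
      hence l: "length xs - 1 < length xs" "length xs - 1 \<noteq> 0" using ne by (auto simp: neq_Nil_conv)
      from claim[OF l(1)] l(2) obtain m where
        m: "dist (xs ! 0) (last xs) \<le> real m" "R m < ?\<rho>" "dist p (last xs) = ?\<rho>"
        using last_conv_nth[OF ne] by auto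
      have "\<bar>f (xs ! 0) - f (last xs)\<bar> < \<epsilon>"
        using m by (intro B[of m]) (auto simp: R_def)
      thus ?thesis using hd_conv_nth[OF ne] by simp
    qed
  qed
qed

end
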